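(* Let $\{\xi_j\}$ be an orthonormal basis of internal states and let $$|\psi\rangle=\hat a_0^\dagger[\xi_{i_0}]\cdots\hat a_{n-1}^\dagger[\xi_{i_{n-1}}]|\vec0\rangle$$ be an input state of $n$ photons in $n$ modes (one per mode) such that for some $r$, $\langle\xi_{i_r}|\xi_{i_j}\rangle=0$ for all $j\ne r$. Then the probability that the $n$-mode Fourier interferometer $F_n$ applied to $|\psi\rangle$, followed by photon-number-resolving detection on all $n$ output modes (insensitive to internal states), yields a valid pattern is exactly $1/n$.
   Context: $\hat a_i^\dagger[\xi]$ creates a photon in external mode $i\in\{0,\dots,n-1\}$ with internal state $\xi$. The Fourier interferometer acts on external modes only: $\hat a_r^\dagger[\xi]\mapsto\frac1{\sqrt n}\sum_{j=0}^{n-1}\omega^{-rj}\hat a_j^\dagger[\xi]$ with $\omega=e^{2\pi i/n}$. A measured occupation pattern $(s_0,\dots,s_{n-1})$ ($s_i$ = number of photons in mode $i$) is valid if $\sum_{i=0}^{n-1}i\,s_i\equiv0\pmod n$. *)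

theory Defs
  imports "HOL-Analysis.Analysis" "HOL-Combinatorics.Permutations"
begin

text \<open>Photon configurations: photon j (created in input mode j) is sent to output
  mode f j.  Such assignments f range over the finite set below.\<close>
definition assignments :: "nat \<Rightarrow> (nat \<Rightarrow> nat) set" where
  "assignments n = ({0..<n} \<rightarrow>\<^sub>E {0..<n})"

definition fourier_phase :: "nat \<Rightarrow> nat \<Rightarrow> nat \<Rightarrow> complex" where
  "fourier_phase n r j = cis (- 2 * pi * real (r * j) / real n)"

text \<open>Coefficient of the monomial prod_j a^dagger_{f j}[xi_{i_j}] |0> in F_n |psi>,
  obtained by expanding prod_j (1/sqrt n) sum_k omega^(-j k) a^dagger_k[xi_{i_j}].\<close>
definition fourier_amp :: "nat \<Rightarrow> (nat \<Rightarrow> nat) \<Rightarrow> complex" where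
  "fourier_amp n f = (\<Prod>j<n. complex_of_real (1 / sqrt (real n)) * fourier_phase n j (f j))"

text \<open>Inner product <0| prod_j a_{g j}[xi_{i_j}] prod_k a^dagger_{f k}[xi_{i_k}] |0>
  from the bosonic commutation relations [a_p[xi], a^dagger_q[eta]] = delta_pq <xi|eta>,
  where internal states are elements xi_{i_j} of an orthonormal basis, so
  <xi_a|xi_b> = (if a = b then 1 else 0).\<close>
definition monomial_inner :: "nat \<Rightarrow> (nat \<Rightarrow> 'b) \<Rightarrow> (nat \<Rightarrow> nat) \<Rightarrow> (nat \<Rightarrow> nat) \<Rightarrow> complex" where
  "monomial_inner n i g f =
     (\<Sum>\<sigma> \<in> {\<sigma>. \<sigma> permutes {0..<n}}.
        \<Prod>j<n. (if g j = f (\<sigma> j) then 1 else 0) * (if i j = i (\<sigma> j) then 1 else 0))"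

definition occupation :: "nat \<Rightarrow> (nat \<Rightarrow> nat) \<Rightarrow> nat \<Rightarrow> nat" where
  "occupation n f k = card {j \<in> {0..<n}. f j = k}"

definition patterns :: "nat \<Rightarrow> (nat \<Rightarrow> nat) set" where
  "patterns n = {s \<in> {0..<n} \<rightarrow>\<^sub>E {0..n}. (\<Sum>k<n. s k) = n}"

text \<open>Probability of detecting occupation pattern s (internal-state insensitive detection):
  squared norm of the projection of F_n |psi> onto the subspace with external occupation s.\<close>
definition detect_prob :: "nat \<Rightarrow> (nat \<Rightarrow> 'b) \<Rightarrow> (nat \<Rightarrow> nat) \<Rightarrow> real" where
  "detect_prob n i s = Re (\<Sum>f \<in> {f \<in> assignments n. (\<lambda>k\<in>{0..<n}. occupation n f k) = s}.
       \<Sum>g \<in> {g \<in> assignments n. (\<lambda>k\<in>{0..<n}. occupation n g k) = s}.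
          cnj (fourier_amp n g) * fourier_amp n f * monomial_inner n i g f)"

definition valid_pattern :: "nat \<Rightarrow> (nat \<Rightarrow> nat) \<Rightarrow> bool" where
  "valid_pattern n s \<longleftrightarrow> (\<Sum>k<n. k * s k) mod n = 0"

definition valid_prob :: "nat \<Rightarrow> (nat \<Rightarrow> 'b) \<Rightarrow> real" where
  "valid_prob n i = (\<Sum>s \<in> {s \<in> patterns n. valid_pattern n s}. detect_prob n i s)"

end

theory Submission
  imports Defs
begin


definition ee :: "nat \<Rightarrow> int \<Rightarrow> complex" where
  "ee n m = cis (2 * pi * of_int m / real n)"

lemma ee_add: "ee n (a + b) = ee n a * ee n b"
  unfolding ee_def by (simp add: cis_mult add_divide_distrib algebra_simps)

lemma ee_0[simp]: "ee n 0 = 1"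
  unfolding ee_def by simp

lemma ee_pow: "ee n m ^ k = ee n (m * int k)"
  unfolding ee_def Complex.DeMoivre by (rule arg_cong[where f=cis]) (simp add: algebra_simps)

lemma ee_cnj: "cnj (ee n m) = ee n (- m)"
  unfolding ee_def by (simp add: cis_cnj)

lemma a3: "cis x = 1 \<Longrightarrow> cos x = 1"
proof -
  assume "cis x = 1" then have "Re (cis x) = Re 1" by (rule arg_cong)
  then show ?thesis by simp
qed
lemma ee_one_iff:
  assumes "0 < n" shows "ee n m = 1 \<longleftrightarrow> int n dvd m"
proof
  assume h: "ee n m = 1"
  then have "cos (2 * pi * of_int m / real n) = 1"
    unfolding ee_def by (rule a3)
  then obtain k :: int where k: "2 * pi * of_int m / real n = real_of_int k * 2 * pi"
    using cos_one_2pi_int by blast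
  then have "real_of_int m = real_of_int k * real n" using assms
    by (simp add: divide_eq_eq algebra_simps)
  then have "m = k * int n" by (metis of_int_eq_iff of_int_mult of_int_of_nat_eq)
  then show "int n dvd m" by simp
next
  assume "int n dvd m"
  then obtain k where "m = int n * k" by blast
  then have "2 * pi * of_int m / real n = 2 * pi * real_of_int k" using assms by simp
  then show "ee n m = 1" unfolding ee_def by simp
qed

lemma char_sum:
  assumes "0 < n"
  shows "(\<Sum>x<n. ee n (c * int x)) = (if int n dvd c then of_nat n else 0)"
proof -
  have "(\<Sum>x<n. ee n (c * int x)) = (\<Sum>x<n. ee n c ^ x)" by (simp add: ee_pow)
  also have "\<dots> = (if ee n c = 1 then of_nat n else (1 - ee n c ^ n) / (1 - ee n c))"
    by (rule sum_gp_strict)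
  also have "ee n c ^ n = 1" using ee_one_iff[OF assms] by (simp add: ee_pow)
  finally show ?thesis using ee_one_iff[OF assms] by simp
qed

lemma indic:
  assumes "0 < n"
  shows "(if int n dvd m then 1 else 0) = (1 / of_nat n) * (\<Sum>t<n. ee n (int t * m))"
  using char_sum[OF assms, of m] assms by (simp add: mult.commute)

lemma phase_ee: "fourier_phase n r j = ee n (- int (r * j))"
  unfolding fourier_phase_def ee_def by (rule arg_cong[where f=cis]) simp

lemma prod_ee: "(\<Prod>j<m. c * ee n (a j)) = c ^ m * ee n (\<Sum>j<m. a j)"
  by (induction m) (simp_all add: ee_add algebra_simps)

lemma amp_eq: "fourier_amp n f = complex_of_real (1 / sqrt (real n)) ^ n * ee n (- (\<Sum>j<n. int (j * f j)))"
  by (simp only: fourier_amp_def phase_ee prod_ee sum_negf)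


lemma ee_sum: "ee n (\<Sum>j<(m::nat). a j) = (\<Prod>j<m. ee n (a j))"
  by (induction m) (simp_all add: ee_add)

lemma int_dvd_diff_less:
  assumes "a < n" "b < n" "int n dvd (int a - int b)"
  shows "a = b"
proof (rule ccontr)
  assume "a \<noteq> b"
  then have "int a - int b \<noteq> 0" by simp
  from dvd_imp_le_int[OF this assms(3)] assms(1,2) show False by simp
qed

lemma L1: "(\<Sum>f\<in>{0..<n} \<rightarrow>\<^sub>E {0..<(n::nat)}. \<Prod>j<n. g j (f j)) = (\<Prod>j<n. \<Sum>x<n. (g j x::complex))"
proof -
  have "(\<Prod>j\<in>{0..<n}. \<Sum>x\<in>{0..<n}. g j x) = (\<Sum>f\<in>{0..<n} \<rightarrow>\<^sub>E {0..<(n::nat)}. \<Prod>j\<in>{0..<n}. (g j (f j)::complex))"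
    by (rule prod_sum_PiE) auto
  then show ?thesis by (simp only: atLeast0LessThan)
qed

lemma perm_inv_id:
  assumes sp: "\<sigma> permutes {0..<n}" and a: "\<not> (\<exists>j<n. inv \<sigma> j \<noteq> j)"
  shows "\<sigma> = id"
proof -
  define \<tau> where "\<tau> = inv \<sigma>"
  from a have h: "\<tau> j = j" if "j < n" for j using that unfolding \<tau>_def by blast
  have tp: "\<tau> permutes {0..<n}" unfolding \<tau>_def by (rule permutes_inv[OF sp])
  have "\<tau> = id"
  proof (rule ext)
    fix x show "\<tau> x = id x"
    proof (cases "x < n")
      case True show ?thesis using h[OF True] by simp
    next
      case False then have xn: "x \<notin> {0..<n}" by simp
      show ?thesis using permutes_not_in[OF tp xn] by simp
    qed
  qed
  moreover have "\<sigma> = inv \<tau>" unfolding \<tau>_def using inv_inv_eq[OF permutes_bij[OF sp]] by simp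
  ultimately show "\<sigma> = id" by simp
qed

lemma K:
  assumes sp: "\<sigma> permutes {0..<n}" and rn: "r < n" and sr: "\<sigma> r = r"
  shows "(\<Sum>f\<in>{f\<in>assignments n. (\<Sum>j<n. f j) mod n = 0}.
            cnj (fourier_amp n (f \<circ> \<sigma>)) * fourier_amp n f)
         = (if \<sigma> = id then 1 / of_nat n else 0)"
proof -
  define \<tau> where "\<tau> = inv \<sigma>"
  have n0: "0 < n" using rn by simp
  define c where "c = complex_of_real (1 / sqrt (real n))"
  define cj where "cj j = int (\<tau> j) - int j" for j
  let ?A = "assignments n"
  let ?V = "{f\<in>assignments n. (\<Sum>j<n. f j) mod n = 0}"
  have finA: "finite ?A" unfolding assignments_def by (simp add: finite_PiE)
  have cc: "cnj c ^ n * c ^ n = (1 / of_nat n) ^ n"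
  proof -
    have "cnj c = c" unfolding c_def by simp
    moreover have "c * c = 1 / of_nat n" unfolding c_def using n0
      by (simp flip: of_real_mult)
    ultimately show ?thesis by (simp flip: power_mult_distrib)
  qed
  have ex: "(\<Sum>j<n. int (j * f (\<sigma> j))) = (\<Sum>j<n. int (\<tau> j * f j))" for f :: "nat \<Rightarrow> nat"
  proof -
    have "(\<Sum>j\<in>{0..<n}. int (\<tau> j * f j)) = (\<Sum>j\<in>{0..<n}. int (\<tau> (\<sigma> j) * f (\<sigma> j)))"
      using sum.permute[OF sp, of "\<lambda>j. int (\<tau> j * f j)"] by (simp add: comp_def)
    also have "\<dots> = (\<Sum>j\<in>{0..<n}. int (j * f (\<sigma> j)))"
      unfolding \<tau>_def using permutes_inverses(2)[OF sp] by simp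
    finally show ?thesis by (simp add: atLeast0LessThan)
  qed
  have trm: "cnj (fourier_amp n (f \<circ> \<sigma>)) * fourier_amp n f
      = (1 / of_nat n) ^ n * ee n (\<Sum>j<n. cj j * int (f j))" for f :: "nat \<Rightarrow> nat"
  proof -
    have "cnj (fourier_amp n (f \<circ> \<sigma>)) * fourier_amp n f
        = (cnj c ^ n * c ^ n) * (ee n (\<Sum>j<n. int (j * f (\<sigma> j))) * ee n (- (\<Sum>j<n. int (j * f j))))"
      unfolding amp_eq c_def[symmetric] by (simp add: ee_cnj)
    also have "ee n (\<Sum>j<n. int (j * f (\<sigma> j))) * ee n (- (\<Sum>j<n. int (j * f j)))
        = ee n (\<Sum>j<n. cj j * int (f j))"
      unfolding ee_add[symmetric] ex cj_def
      by (rule arg_cong[where f="ee n"]) (simp add: sum_subtractf algebra_simps)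
    finally show ?thesis using cc by (simp add: o_def)
  qed
  have Veq: "?V = {f\<in>?A. int n dvd int (\<Sum>j<n. f j)}"
    by (rule Collect_cong) (metis int_dvd_int_iff dvd_eq_mod_eq_0)
  have "(\<Sum>f\<in>?V. ee n (\<Sum>j<n. cj j * int (f j)))
      = (\<Sum>f\<in>?A. (if int n dvd int (\<Sum>j<n. f j) then 1 else 0) * ee n (\<Sum>j<n. cj j * int (f j)))"
    unfolding Veq using finA by (auto simp: sum.inter_filter intro!: sum.cong)
  also have "\<dots> = (\<Sum>f\<in>?A. (1 / of_nat n) * (\<Sum>t<n. ee n (int t * int (\<Sum>j<n. f j)) * ee n (\<Sum>j<n. cj j * int (f j))))"
    by (rule sum.cong[OF refl]) (simp only: indic[OF n0] sum_distrib_right mult.assoc)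
  also have "\<dots> = (1 / of_nat n) * (\<Sum>t<n. \<Sum>f\<in>?A. \<Prod>j<n. ee n ((int t + cj j) * int (f j)))"
  proof -
    have "ee n (int t * int (\<Sum>j<n. f j)) * ee n (\<Sum>j<n. cj j * int (f j))
          = (\<Prod>j<n. ee n ((int t + cj j) * int (f j)))" for t f
    proof -
      have h: "int t * int (\<Sum>j<n. f j) + (\<Sum>j<n. cj j * int (f j)) = (\<Sum>j<n. (int t + cj j) * int (f j))"
        by (simp add: of_nat_sum sum_distrib_left sum.distrib algebra_simps)
      have "ee n (int t * int (\<Sum>j<n. f j)) * ee n (\<Sum>j<n. cj j * int (f j))
          = ee n (int t * int (\<Sum>j<n. f j) + (\<Sum>j<n. cj j * int (f j)))" by (rule ee_add[symmetric])
      also have "\<dots> = ee n (\<Sum>j<n. (int t + cj j) * int (f j))" by (simp only: h)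
      also have "\<dots> = (\<Prod>j<n. ee n ((int t + cj j) * int (f j)))" by (rule ee_sum)
      finally show ?thesis .
    qed
    then have "(\<Sum>f\<in>?A. (1 / of_nat n) * (\<Sum>t<n. ee n (int t * int (\<Sum>j<n. f j)) * ee n (\<Sum>j<n. cj j * int (f j))))
        = (1 / of_nat n) * (\<Sum>f\<in>?A. \<Sum>t<n. \<Prod>j<n. ee n ((int t + cj j) * int (f j)))"
      by (simp only: sum_distrib_left[symmetric])
    also have "\<dots> = (1 / of_nat n) * (\<Sum>t<n. \<Sum>f\<in>?A. \<Prod>j<n. ee n ((int t + cj j) * int (f j)))"
      by (subst sum.swap) (rule refl)
    finally show ?thesis .
  qed
  also have "\<dots> = (1 / of_nat n) * (\<Sum>t<n. \<Prod>j<n. (if int n dvd (int t + cj j) then of_nat n else 0))"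
  proof -
    have "(\<Sum>f\<in>?A. \<Prod>j<n. ee n ((int t + cj j) * int (f j)))
          = (\<Prod>j<n. \<Sum>x<n. ee n ((int t + cj j) * int x))" for t
      unfolding assignments_def by (rule L1[where g="\<lambda>j x. ee n ((int t + cj j) * int x)"])
    then show ?thesis by (simp only: char_sum[OF n0])
  qed
  finally have main: "(\<Sum>f\<in>?V. ee n (\<Sum>j<n. cj j * int (f j)))
      = (1 / of_nat n) * (\<Sum>t<n. \<Prod>j<n. (if int n dvd (int t + cj j) then of_nat n else 0 :: complex))" .
  have \<tau>r: "\<tau> r = r" unfolding \<tau>_def using sr permutes_inv_eq[OF sp] by metis
  have Qt: "(\<Prod>j<n. (if int n dvd (int t + cj j) then of_nat n else 0 :: complex)) = 0"
    if "t < n" "t \<noteq> 0" for t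
  proof (rule prod_zero)
    show "\<exists>j\<in>{..<n}. (if int n dvd (int t + cj j) then of_nat n else 0 :: complex) = 0"
    proof (intro bexI)
      have "\<not> int n dvd int t" using that by (auto dest: zdvd_imp_le)
      then show "(if int n dvd (int t + cj r) then of_nat n else 0 :: complex) = 0"
        using \<tau>r by (simp add: cj_def)
    qed (use rn in auto)
  qed simp
  have "(\<Sum>t<n. \<Prod>j<n. (if int n dvd (int t + cj j) then of_nat n else 0 :: complex))
      = (\<Sum>t<n. if t = 0 then (\<Prod>j<n. (if int n dvd (cj j) then of_nat n else 0 :: complex)) else 0)"
    by (rule sum.cong) (auto simp: Qt)
  also have "\<dots> = (\<Prod>j<n. (if int n dvd (cj j) then of_nat n else 0 :: complex))"
    using n0 by simp
  also have "\<dots> = (if \<sigma> = id then of_nat n ^ n else 0)"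
  proof (cases "\<sigma> = id")
    case True
    then have "\<tau> = id" unfolding \<tau>_def by simp
    then show ?thesis using True by (simp add: cj_def)
  next
    case False
    have "\<exists>j<n. \<tau> j \<noteq> j"
      using perm_inv_id[OF sp] False unfolding \<tau>_def by blast
    then obtain j where j: "j < n" "\<tau> j \<noteq> j" by blast
    have "\<tau> j < n" using permutes_in_image[OF permutes_inv[OF sp]] j(1) unfolding \<tau>_def by simp
    then have "\<not> int n dvd cj j" using int_dvd_diff_less[of "\<tau> j" n j] j by (auto simp: cj_def)
    then have "(\<Prod>j<n. (if int n dvd (cj j) then of_nat n else 0 :: complex)) = 0"
      using j(1) by (intro prod_zero) auto
    then show ?thesis using False by simp
  qed
  finally have S: "(\<Sum>t<n. \<Prod>j<n. (if int n dvd (int t + cj j) then of_nat n else 0 :: complex))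
      = (if \<sigma> = id then of_nat n ^ n else 0)" .
  have "(\<Sum>f\<in>?V. cnj (fourier_amp n (f \<circ> \<sigma>)) * fourier_amp n f)
      = (1 / of_nat n) ^ n * (\<Sum>f\<in>?V. ee n (\<Sum>j<n. cj j * int (f j)))"
    by (simp add: trm sum_distrib_left)
  also have "\<dots> = (if \<sigma> = id then 1 / of_nat n else 0)"
    unfolding main S using n0 by (cases "\<sigma> = id") (simp_all add: power_divide)
  finally show ?thesis .
qed



abbreviation occ :: "nat \<Rightarrow> (nat \<Rightarrow> nat) \<Rightarrow> nat \<Rightarrow> nat" where
  "occ n f \<equiv> (\<lambda>k\<in>{0..<n}. occupation n f k)"

lemma finA: "finite (assignments n)"
  unfolding assignments_def by (simp add: finite_PiE)

lemma occ_sum: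
  assumes "f \<in> assignments n"
  shows "(\<Sum>k<n. h k * occupation n f k) = (\<Sum>j<n. h (f j))"
proof -
  have im: "f ` {0..<n} \<subseteq> {..<n}" using assms unfolding assignments_def by auto
  have "(\<Sum>j<n. h (f j)) = (\<Sum>j\<in>{0..<n}. h (f j))" by (simp add: atLeast0LessThan)
  also have "\<dots> = (\<Sum>k\<in>{..<n}. \<Sum>j\<in>{x. x \<in> {0..<n} \<and> f x = k}. h (f j))"
    by (rule sum.group[symmetric]) (use im in auto)
  also have "\<dots> = (\<Sum>k<n. h k * occupation n f k)"
    unfolding occupation_def by (rule sum.cong) auto
  finally show ?thesis by simp
qed

lemma occ_pat:
  assumes "f \<in> assignments n"
  shows "occ n f \<in> patterns n"
proof -
  have "card {j \<in> {0..<n}. f j = k} \<le> n" for k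
  proof -
    have "{j \<in> {0..<n}. f j = k} \<subseteq> {0..<n}" by auto
    then have "card {j \<in> {0..<n}. f j = k} \<le> card {0..<n}" by (rule card_mono[rotated]) simp
    then show ?thesis by simp
  qed
  then have "occ n f \<in> {0..<n} \<rightarrow>\<^sub>E {0..n}" unfolding occupation_def by auto
  moreover have "(\<Sum>k<n. occ n f k) = n"
    using occ_sum[OF assms, of "\<lambda>_. 1"] by simp
  ultimately show ?thesis unfolding patterns_def by simp
qed

lemma occ_valid:
  assumes "f \<in> assignments n"
  shows "valid_pattern n (occ n f) \<longleftrightarrow> (\<Sum>j<n. f j) mod n = 0"
proof -
  have "(\<Sum>k<n. k * occ n f k) = (\<Sum>k<n. k * occupation n f k)" by simp
  also have "\<dots> = (\<Sum>j<n. f j)" using occ_sum[OF assms, of "\<lambda>k. k"] by simp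
  finally show ?thesis unfolding valid_pattern_def by simp
qed

lemma occ_perm:
  assumes sp: "\<sigma> permutes {0..<n}"
  shows "occupation n (\<lambda>j. f (\<sigma> j)) k = occupation n f k"
proof -
  let ?S = "{j \<in> {0..<n}. f (\<sigma> j) = k}"
  let ?T = "{j \<in> {0..<n}. f j = k}"
  have eq: "\<sigma> ` ?S = ?T"
  proof
    show "\<sigma> ` ?S \<subseteq> ?T"
    proof (rule image_subsetI)
      fix j assume j: "j \<in> ?S"
      then have "j \<in> {0..<n}" by simp
      then have "\<sigma> j \<in> {0..<n}" by (simp only: permutes_in_image[OF sp])
      then show "\<sigma> j \<in> ?T" using j by simp
    qed
  next
    show "?T \<subseteq> \<sigma> ` ?S"
    proof
      fix x assume x: "x \<in> ?T"
      have e: "\<sigma> (inv \<sigma> x) = x" by (rule permutes_inverses(1)[OF sp])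
      have "x \<in> {0..<n}" using x by simp
      then have "inv \<sigma> x \<in> {0..<n}" by (simp only: permutes_in_image[OF permutes_inv[OF sp]])
      then have "inv \<sigma> x \<in> ?S" using x e by simp
      then show "x \<in> \<sigma> ` ?S" by (rule image_eqI[where f=\<sigma> and x="inv \<sigma> x", OF e[symmetric]])
    qed
  qed
  have inj: "inj_on \<sigma> ?S" by (rule inj_on_subset[OF permutes_inj[OF sp]]) simp
  have "card (\<sigma> ` ?S) = card ?S" by (rule card_image[OF inj])
  then have "card ?S = card ?T" using eq by simp
  then show ?thesis unfolding occupation_def .
qed

lemma prod_ind:
  "(\<Prod>j<(m::nat). (if P j then 1 else 0) * (if Q j then 1 else 0) :: complex)
     = (if \<forall>j<m. P j \<and> Q j then 1 else 0)"
  by (induction m) (auto simp: less_Suc_eq)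

lemma M_eq:
  "monomial_inner n i g f = (\<Sum>\<sigma>\<in>{\<sigma>. \<sigma> permutes {0..<n}}.
      (if \<forall>j<n. g j = f (\<sigma> j) \<and> i j = i (\<sigma> j) then 1 else 0))"
  unfolding monomial_inner_def by (simp only: prod_ind)

lemma amp_restrict: "fourier_amp n (restrict h {0..<n}) = fourier_amp n h"
  unfolding fourier_amp_def by (rule prod.cong) auto



theorem theorem5:
  fixes n r :: nat and i :: "nat \<Rightarrow> 'b"
  assumes "r < n"
    and "\<forall>j<n. j \<noteq> r \<longrightarrow> i j \<noteq> i r"
  shows "valid_prob n i = 1 / real n"
proof -
  let ?A = "assignments n"
  let ?P = "{\<sigma>. \<sigma> permutes {0..<n}}"
  let ?G = "{\<sigma>\<in>?P. \<forall>j<n. i j = i (\<sigma> j)}"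
  let ?V = "{f\<in>?A. (\<Sum>j<n. f j) mod n = 0}"
  let ?Vp = "{s \<in> patterns n. valid_pattern n s}"
  let ?F = "\<lambda>s. {f \<in> ?A. occ n f = s}"
  define T where "T g f = cnj (fourier_amp n g) * fourier_amp n f * monomial_inner n i g f" for g f
  define H where "H f = (\<Sum>g\<in>?A. T g f)" for f
  define Y where "Y \<sigma> f = cnj (fourier_amp n (f \<circ> \<sigma>)) * fourier_amp n f" for \<sigma> f
  have n0: "0 < n" using assms(1) by simp
  have finP: "finite ?P" by (rule finite_permutations) simp
  have finG: "finite ?G" using finP by simp
  have finV: "finite ?V" using finA by simp
  have s1: "(\<Sum>g\<in>?F (occ n f). T g f) = H f" if f: "f \<in> ?A" for f
    unfolding H_def
  proof (rule sum.mono_neutral_left[OF finA])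
    show "?F (occ n f) \<subseteq> ?A" by auto
    show "\<forall>g\<in>?A - ?F (occ n f). T g f = 0"
    proof
      fix g assume g: "g \<in> ?A - ?F (occ n f)"
      have "monomial_inner n i g f = 0"
        unfolding M_eq
      proof (rule sum.neutral, rule ballI)
        fix \<sigma> assume s: "\<sigma> \<in> ?P"
        show "(if \<forall>j<n. g j = f (\<sigma> j) \<and> i j = i (\<sigma> j) then 1 else 0) = (0::complex)"
        proof (rule ccontr)
          assume "(if \<forall>j<n. g j = f (\<sigma> j) \<and> i j = i (\<sigma> j) then 1 else 0) \<noteq> (0::complex)"
          then have hg: "\<forall>j<n. g j = f (\<sigma> j)" by (auto split: if_splits)
          have "occupation n g k = occupation n (\<lambda>j. f (\<sigma> j)) k" for k
            unfolding occupation_def using hg by (metis (mono_tags, lifting) atLeastLessThan_iff)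
          then have "occupation n g k = occupation n f k" for k
            using occ_perm[of \<sigma> n f k] s by simp
          then have "occ n g = occ n f" by simp
          then show False using g by simp
        qed
      qed
      then show "T g f = 0" unfolding T_def by simp
    qed
  qed
  have "valid_prob n i = Re (\<Sum>s\<in>?Vp. \<Sum>f\<in>?F s. \<Sum>g\<in>?F s. T g f)"
    unfolding valid_prob_def detect_prob_def T_def by (simp add: Re_sum)
  also have "(\<Sum>s\<in>?Vp. \<Sum>f\<in>?F s. \<Sum>g\<in>?F s. T g f) = (\<Sum>s\<in>?Vp. \<Sum>f\<in>?F s. H f)"
  proof (rule sum.cong[OF refl], rule sum.cong[OF refl])
    fix s f assume "f \<in> ?F s"
    then have "f \<in> ?A" "s = occ n f" by auto
    then show "(\<Sum>g\<in>?F s. T g f) = H f" using s1 by simp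
  qed
  also have "\<dots> = (\<Sum>f\<in>?V. H f)"
  proof -
    have "(\<Sum>s\<in>?Vp. \<Sum>f\<in>{x. x \<in> ?V \<and> occ n x = s}. H f) = (\<Sum>f\<in>?V. H f)"
    proof (rule sum.group[OF finV])
      show "finite ?Vp" unfolding patterns_def by (rule finite_subset[of _ "{0..<n} \<rightarrow>\<^sub>E {0..n}"]) (auto simp: finite_PiE)
      show "occ n ` ?V \<subseteq> ?Vp" using occ_pat occ_valid by auto
    qed
    moreover have "{x. x \<in> ?V \<and> occ n x = s} = ?F s" if "s \<in> ?Vp" for s
      using that occ_valid by auto
    ultimately show ?thesis by (metis (no_types, lifting) sum.cong)
  qed
  also have "\<dots> = (\<Sum>f\<in>?V. \<Sum>\<sigma>\<in>?G. Y \<sigma> f)"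
  proof (rule sum.cong[OF refl])
    fix f assume "f \<in> ?V"
    then have fA: "f \<in> ?A" by simp
    have "H f = (\<Sum>g\<in>?A. \<Sum>\<sigma>\<in>?P. (if \<forall>j<n. g j = f (\<sigma> j) \<and> i j = i (\<sigma> j)
                 then cnj (fourier_amp n g) * fourier_amp n f else 0))"
      unfolding H_def T_def M_eq by (auto simp: sum_distrib_left intro!: sum.cong)
    also have "\<dots> = (\<Sum>\<sigma>\<in>?P. \<Sum>g\<in>?A. (if \<forall>j<n. g j = f (\<sigma> j) \<and> i j = i (\<sigma> j)
                 then cnj (fourier_amp n g) * fourier_amp n f else 0))"
      by (rule sum.swap)
    also have "\<dots> = (\<Sum>\<sigma>\<in>?P. if \<forall>j<n. i j = i (\<sigma> j) then Y \<sigma> f else 0)"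
    proof (rule sum.cong[OF refl])
      fix \<sigma> assume s: "\<sigma> \<in> ?P"
      define g0 where "g0 = restrict (f \<circ> \<sigma>) {0..<n}"
      have g0A: "g0 \<in> ?A"
      proof -
        have "\<sigma> j \<in> {0..<n}" if "j \<in> {0..<n}" for j
          using that permutes_in_image[of \<sigma> "{0..<n}" j] s by simp
        then show ?thesis using fA unfolding g0_def assignments_def by (auto simp: PiE_iff)
      qed
      have cond: "(\<forall>j<n. g j = f (\<sigma> j) \<and> i j = i (\<sigma> j)) \<longleftrightarrow> g = g0 \<and> (\<forall>j<n. i j = i (\<sigma> j))"
        if gA: "g \<in> ?A" for g
      proof -
        have "(\<forall>j<n. g j = f (\<sigma> j)) \<longleftrightarrow> g = g0"
        proof
          assume h: "\<forall>j<n. g j = f (\<sigma> j)"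
          show "g = g0"
          proof (rule extensionalityI)
            show "g \<in> extensional {0..<n}" using gA unfolding assignments_def by (simp add: PiE_iff)
            show "g0 \<in> extensional {0..<n}" unfolding g0_def by simp
            fix x assume "x \<in> {0..<n}" then show "g x = g0 x" using h unfolding g0_def by simp
          qed
        next
          assume "g = g0" then show "\<forall>j<n. g j = f (\<sigma> j)" unfolding g0_def by simp
        qed
        then show ?thesis by blast
      qed
      have "(\<Sum>g\<in>?A. (if \<forall>j<n. g j = f (\<sigma> j) \<and> i j = i (\<sigma> j)
                 then cnj (fourier_amp n g) * fourier_amp n f else 0))
          = (\<Sum>g\<in>?A. (if g = g0 then (if \<forall>j<n. i j = i (\<sigma> j) then cnj (fourier_amp n g) * fourier_amp n f else 0) else 0))"
        by (rule sum.cong[OF refl]) (simp add: cond)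
      also have "\<dots> = (if \<forall>j<n. i j = i (\<sigma> j) then cnj (fourier_amp n g0) * fourier_amp n f else 0)"
        using g0A finA by (simp add: sum.delta')
      also have "\<dots> = (if \<forall>j<n. i j = i (\<sigma> j) then Y \<sigma> f else 0)"
        unfolding Y_def g0_def amp_restrict ..
      finally show "(\<Sum>g\<in>?A. (if \<forall>j<n. g j = f (\<sigma> j) \<and> i j = i (\<sigma> j)
                 then cnj (fourier_amp n g) * fourier_amp n f else 0))
          = (if \<forall>j<n. i j = i (\<sigma> j) then Y \<sigma> f else 0)" .
    qed
    also have "\<dots> = (\<Sum>\<sigma>\<in>?G. Y \<sigma> f)"
      by (rule sum.inter_filter[symmetric, OF finP])
    finally show "H f = (\<Sum>\<sigma>\<in>?G. Y \<sigma> f)" .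
  qed
  also have "\<dots> = (\<Sum>\<sigma>\<in>?G. \<Sum>f\<in>?V. Y \<sigma> f)"
    by (rule sum.swap)
  also have "\<dots> = (\<Sum>\<sigma>\<in>?G. if \<sigma> = id then 1 / of_nat n else 0)"
  proof (rule sum.cong[OF refl])
    fix \<sigma> assume s: "\<sigma> \<in> ?G"
    then have sp: "\<sigma> permutes {0..<n}" and si: "\<forall>j<n. i j = i (\<sigma> j)" by auto
    have "\<sigma> r \<in> {0..<n}" using permutes_in_image[OF sp, of r] assms(1) by simp
    then have "\<sigma> r < n" by simp
    moreover have "i (\<sigma> r) = i r" using si assms(1) by simp
    ultimately have sr: "\<sigma> r = r" using assms(2) by blast
    show "(\<Sum>f\<in>?V. Y \<sigma> f) = (if \<sigma> = id then 1 / of_nat n else 0)"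
      unfolding Y_def by (rule K[OF sp assms(1) sr])
  qed
  also have "\<dots> = 1 / of_nat n"
  proof -
    have "id \<in> ?G" by (simp add: permutes_id)
    then show ?thesis using finG by (simp add: sum.delta')
  qed
  finally show ?thesis by simp
qed


end
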